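(* Assume $c\ge0$ and that for every bounded interval $J\subset I$ there exist a positive $\varphi_J\in C^2(\mathbb R^d)$ with $\varphi_J(x)\to+\infty$ as $|x|\to\infty$ and a constant $M_J>0$ with $(\mathcal A(t)\varphi_J)(x)\le M_J$ for $(t,x)\in J\times\mathbb R^d$. Then for every bounded interval $J\subset I$ and every $\rho>0$, the function $(t,s,x)\mapsto(G(t,s)\varphi_J)(x)=\int_{\mathbb R^d}\varphi_J(y)\,g_{t,s}(x,dy)$ is finite and bounded on $\Lambda_J\times B(0,\rho)$.
   Context: Let $d\ge1$, $\alpha\in(0,1)$, $I\subseteq\mathbb R$ either $\mathbb R$ or a right half-line; $\Lambda_J=\{(t,s)\in J\times J:t\ge s\}$. For $t\in I$, $(\mathcal A(t)\psi)(x)=\sum_{i,j}q_{ij}(t,x)D_{ij}\psi(x)+\sum_ib_i(t,x)D_i\psi(x)-c(t,x)\psi(x)$, with: $q_{ij},b_i,c\in C^{\alpha/2,\alpha}_{\rm loc}(I\times\mathbb R^d)$; $\inf c>-\infty$; $Q=(q_{ij})$ symmetric with $\langle Q(t,x)\xi,\xi\rangle\ge\eta(t,x)|\xi|^2$, $\inf\eta>0$; for every bounded interval $J\subset I$ there are positive $\phi_J\in C^2(\mathbb R^d)$ with $\phi_J\to+\infty$ at infinity and $\lambda_J$ with $\mathcal A(t)\phi_J\le\lambda_J\phi_J$ on $J\times\mathbb R^d$. $G(t,s)$ is the evolution operator on $C_b(\mathbb R^d)$: $G(t,s)f=u_f(t,\cdot)$, $u_f$ the unique solution (bounded on strips, in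 $C([s,\infty)\times\mathbb R^d)\cap C^{1+\alpha/2,2+\alpha}_{\rm loc}((s,\infty)\times\mathbb R^d)$) of $D_tu=\mathcal A(t)u$, $u(s)=f$. Its Green function $g$ is positive with $(G(t,s)f)(x)=\int g(t,s,x,y)f(y)dy$; $g_{t,s}(x,dy)=g(t,s,x,y)dy$ for $t>s$, $g_{t,t}(x,dy)=\delta_x$; this defines $G(t,s)$ on nonnegative Borel functions (values in $[0,+\infty]$). *)

theory Defs
  imports "HOL-Analysis.Analysis"
begin

text \<open>Points of R^d are vectors of type real^'n (d = CARD('n)).
  e_i is axis i 1. Partial derivative D_i psi (x) = d/dh psi(x + h e_i) at h = 0.\<close>

definition pd :: "'n::finite \<Rightarrow> (real^'n \<Rightarrow> real) \<Rightarrow> real^'n \<Rightarrow> real" where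
  "pd i \<psi> x = deriv (\<lambda>h. \<psi> (x + h *\<^sub>R axis i 1)) 0"

definition C2 :: "(real^'n::finite \<Rightarrow> real) \<Rightarrow> bool" where
  "C2 \<psi> \<longleftrightarrow> continuous_on UNIV \<psi>
     \<and> (\<forall>i x. ((\<lambda>h. \<psi> (x + h *\<^sub>R axis i 1)) has_real_derivative pd i \<psi> x) (at 0))
     \<and> (\<forall>i. continuous_on UNIV (pd i \<psi>))
     \<and> (\<forall>i j x. ((\<lambda>h. pd i \<psi> (x + h *\<^sub>R axis j 1)) has_real_derivative pd j (pd i \<psi>) x) (at 0))
     \<and> (\<forall>i j. continuous_on UNIV (pd j (pd i \<psi>)))"

definition Aop :: "(real \<Rightarrow> real^'n \<Rightarrow> 'n \<Rightarrow> 'n \<Rightarrow> real) \<Rightarrow> (real \<Rightarrow> real^'n \<Rightarrow> 'n \<Rightarrow> real)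
    \<Rightarrow> (real \<Rightarrow> real^'n \<Rightarrow> real) \<Rightarrow> real \<Rightarrow> (real^'n::finite \<Rightarrow> real) \<Rightarrow> real^'n \<Rightarrow> real" where
  "Aop q b c t \<psi> x = (\<Sum>i\<in>UNIV. \<Sum>j\<in>UNIV. q t x i j * pd j (pd i \<psi>) x)
       + (\<Sum>i\<in>UNIV. b t x i * pd i \<psi> x) - c t x * \<psi> x"

definition holder_loc :: "real \<Rightarrow> (real \<times> (real^'n::finite)) set \<Rightarrow> (real \<Rightarrow> real^'n \<Rightarrow> real) \<Rightarrow> bool" where
  "holder_loc \<alpha> S f \<longleftrightarrow> (\<forall>K. compact K \<and> K \<subseteq> S \<longrightarrow>
     (\<exists>C. \<forall>t x s y. (t, x) \<in> K \<and> (s, y) \<in> K \<longrightarrow>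
        \<bar>f t x - f s y\<bar> \<le> C * (\<bar>t - s\<bar> powr (\<alpha> / 2) + norm (x - y) powr \<alpha>)))"

text \<open>Classical solution of D_t u = A(t) u on (s,infinity) x R^d, u(s) = f, which is continuous on
  [s,infinity) x R^d, bounded on every strip [s,T] x R^d, and in C^{1+alpha/2,2+alpha}_loc((s,infinity) x R^d)
  (ut = D_t u, ux i = D_i u, uxx i j = D_j D_i u; ut and uxx locally Hoelder, ux continuous).\<close>
definition cauchy_sol :: "real \<Rightarrow> (real \<Rightarrow> real^'n \<Rightarrow> 'n \<Rightarrow> 'n \<Rightarrow> real) \<Rightarrow> (real \<Rightarrow> real^'n \<Rightarrow> 'n \<Rightarrow> real)
    \<Rightarrow> (real \<Rightarrow> real^'n \<Rightarrow> real) \<Rightarrow> real \<Rightarrow> (real^'n::finite \<Rightarrow> real) \<Rightarrow> (real \<Rightarrow> real^'n \<Rightarrow> real) \<Rightarrow> bool" where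
  "cauchy_sol \<alpha> q b c s f u \<longleftrightarrow>
     continuous_on ({s..} \<times> UNIV) (\<lambda>(t, x). u t x)
   \<and> (\<forall>T. bounded ((\<lambda>(t, x). u t x) ` ({s..T} \<times> UNIV)))
   \<and> (\<forall>x. u s x = f x)
   \<and> (\<exists>ut ux uxx.
        (\<forall>t x. t > s \<longrightarrow> ((\<lambda>\<tau>. u \<tau> x) has_real_derivative ut t x) (at t))
      \<and> (\<forall>t x i. t > s \<longrightarrow> ((\<lambda>h. u t (x + h *\<^sub>R axis i 1)) has_real_derivative ux t x i) (at 0))
      \<and> (\<forall>t x i j. t > s \<longrightarrow> ((\<lambda>h. ux t (x + h *\<^sub>R axis j 1) i) has_real_derivative uxx t x i j) (at 0))
      \<and> (\<forall>i. continuous_on ({s<..} \<times> UNIV) (\<lambda>(t, x). ux t x i))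
      \<and> holder_loc \<alpha> ({s<..} \<times> UNIV) ut
      \<and> (\<forall>i j. holder_loc \<alpha> ({s<..} \<times> UNIV) (\<lambda>t x. uxx t x i j))
      \<and> (\<forall>t x. t > s \<longrightarrow> ut t x = (\<Sum>i\<in>UNIV. \<Sum>j\<in>UNIV. q t x i j * uxx t x i j)
                                 + (\<Sum>i\<in>UNIV. b t x i * ux t x i) - c t x * u t x))"

definition bdd_interval :: "real set \<Rightarrow> bool" where
  "bdd_interval J \<longleftrightarrow> is_interval J \<and> bounded J"

text \<open>G(t,s) on nonnegative functions via the Green function: integral against g_{t,s}(x,dy),
  with g_{t,t}(x,dy) = Dirac at x.\<close>
definition Gnn :: "(real \<Rightarrow> real \<Rightarrow> real^'n \<Rightarrow> real^'n \<Rightarrow> real) \<Rightarrow> real \<Rightarrow> real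
    \<Rightarrow> (real^'n::finite \<Rightarrow> real) \<Rightarrow> real^'n \<Rightarrow> ennreal" where
  "Gnn g t s \<phi> x = (if t = s then ennreal (\<phi> x)
                     else \<integral>\<^sup>+ y. ennreal (g t s x y * \<phi> y) \<partial>lborel)"

end

theory Submission
  imports Defs
begin



lemma axis_deriv_shift:
  fixes F :: "real^'n::finite \<Rightarrow> real"
  assumes d: "\<And>x. ((\<lambda>h. F (x + h *\<^sub>R axis a (1::real))) has_real_derivative DF x) (at 0)"
  shows "((\<lambda>s. F (y + s *\<^sub>R axis a (1::real))) has_real_derivative DF (y + s0 *\<^sub>R axis a (1::real))) (at s0)"
proof -
  have "((\<lambda>h. F ((y + s0 *\<^sub>R axis a (1::real)) + h *\<^sub>R axis a (1::real))) has_real_derivative DF (y + s0 *\<^sub>R axis a (1::real))) (at 0)"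
    by (rule d)
  moreover have "(\<lambda>h. F ((y + s0 *\<^sub>R axis a (1::real)) + h *\<^sub>R axis a (1::real))) = (\<lambda>h. (\<lambda>s. F (y + s *\<^sub>R axis a (1::real))) (h + s0))"
    by (auto simp: algebra_simps scaleR_add_left)
  ultimately show ?thesis using DERIV_shift[where f="\<lambda>s. F (y + s *\<^sub>R axis a (1::real))" and x=0 and z=s0] by simp
qed

lemma axis_mvt:
  fixes F :: "real^'n::finite \<Rightarrow> real"
  assumes d: "\<And>x. ((\<lambda>h. F (x + h *\<^sub>R axis a (1::real))) has_real_derivative DF x) (at 0)"
  shows "\<exists>\<theta>. \<bar>\<theta>\<bar> \<le> \<bar>c\<bar> \<and> F (y + c *\<^sub>R axis a (1::real)) - F y = c * DF (y + \<theta> *\<^sub>R axis a (1::real))"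
proof -
  note D = axis_deriv_shift[of F a DF, OF d]
  consider "c = 0" | "c > 0" | "c < 0" by linarith
  then show ?thesis
  proof cases
    case 1 then show ?thesis by (auto intro!: exI[of _ 0])
  next
    case 2
    from MVT2[OF 2, of "\<lambda>s. F (y + s *\<^sub>R axis a (1::real))" "\<lambda>s. DF (y + s *\<^sub>R axis a (1::real))"] D
    obtain z where "0 < z" "z < c" "F (y + c *\<^sub>R axis a (1::real)) - F (y + 0 *\<^sub>R axis a (1::real)) = (c - 0) * DF (y + z *\<^sub>R axis a (1::real))"
      by blast
    then show ?thesis by (auto intro!: exI[of _ z])
  next
    case 3
    from MVT2[OF 3, of "\<lambda>s. F (y + s *\<^sub>R axis a (1::real))" "\<lambda>s. DF (y + s *\<^sub>R axis a (1::real))"] D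
    obtain z where "c < z" "z < 0" "F (y + 0 *\<^sub>R axis a (1::real)) - F (y + c *\<^sub>R axis a (1::real)) = (0 - c) * DF (y + z *\<^sub>R axis a (1::real))"
      by blast
    then show ?thesis by (auto intro!: exI[of _ z] simp: algebra_simps)
  qed
qed

lemma telescope:
  fixes F :: "real^'n::finite \<Rightarrow> real"
  assumes d: "\<And>i x. ((\<lambda>h. F (x + h *\<^sub>R axis i (1::real))) has_real_derivative DF i x) (at 0)"
  assumes "finite A"
  shows "\<forall>y k. \<exists>z. (\<forall>i\<in>A. norm (z i - y) \<le> \<bar>k\<bar> * (\<Sum>j\<in>A. \<bar>v$j\<bar>))
      \<and> F (y + k *\<^sub>R (\<Sum>i\<in>A. (v$i) *\<^sub>R axis i (1::real))) - F y = k * (\<Sum>i\<in>A. v$i * DF i (z i))"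
  using assms(2)
proof (induction A rule: finite_induct)
  case empty
  then show ?case by simp
next
  case (insert a A)
  show ?case
  proof (intro allI)
    fix y k
    from insert.IH obtain z where z1: "\<forall>i\<in>A. norm (z i - y) \<le> \<bar>k\<bar> * (\<Sum>j\<in>A. \<bar>v$j\<bar>)"
      and z2: "F (y + k *\<^sub>R (\<Sum>i\<in>A. (v$i) *\<^sub>R axis i (1::real))) - F y = k * (\<Sum>i\<in>A. v$i * DF i (z i))"
      by blast
    define y' where "y' = y + k *\<^sub>R (\<Sum>i\<in>A. (v$i) *\<^sub>R axis i (1::real))"
    obtain \<theta> where th1: "\<bar>\<theta>\<bar> \<le> \<bar>k * v$a\<bar>"
      and th2: "F (y' + (k * v$a) *\<^sub>R axis a (1::real)) - F y' = (k * v$a) * DF a (y' + \<theta> *\<^sub>R axis a (1::real))"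
      using axis_mvt[of F a "DF a", OF d] by blast
    define z' where "z' = z(a := y' + \<theta> *\<^sub>R axis a (1::real))"
    have nA: "norm (\<Sum>i\<in>A. (v$i) *\<^sub>R axis i (1::real)) \<le> (\<Sum>j\<in>A. \<bar>v$j\<bar>)"
      by (rule order_trans[OF norm_sum]) (simp add: norm_axis_1)
    have s0: "0 \<le> (\<Sum>j\<in>A. \<bar>v$j\<bar>)" by (simp add: sum_nonneg)
    have "norm (z' a - y) = norm (k *\<^sub>R (\<Sum>i\<in>A. (v$i) *\<^sub>R axis i (1::real)) + \<theta> *\<^sub>R axis a (1::real))"
      by (simp add: z'_def y'_def)
    also have "\<dots> \<le> \<bar>k\<bar> * (\<Sum>j\<in>A. \<bar>v$j\<bar>) + \<bar>\<theta>\<bar>"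
      by (rule order_trans[OF norm_triangle_ineq]) (simp add: mult_left_mono nA)
    also have "\<dots> \<le> \<bar>k\<bar> * (\<Sum>j\<in>insert a A. \<bar>v$j\<bar>)"
      using th1 insert.hyps by (simp add: algebra_simps abs_mult)
    finally have za: "norm (z' a - y) \<le> \<bar>k\<bar> * (\<Sum>j\<in>insert a A. \<bar>v$j\<bar>)" .
    have zA: "\<forall>i\<in>A. norm (z' i - y) \<le> \<bar>k\<bar> * (\<Sum>j\<in>insert a A. \<bar>v$j\<bar>)"
    proof
      fix i assume "i \<in> A"
      then have "z' i = z i" using insert.hyps by (auto simp: z'_def)
      moreover have "\<bar>k\<bar> * (\<Sum>j\<in>A. \<bar>v$j\<bar>) \<le> \<bar>k\<bar> * (\<Sum>j\<in>insert a A. \<bar>v$j\<bar>)"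
        using insert.hyps by (simp add: mult_left_mono)
      ultimately show "norm (z' i - y) \<le> \<bar>k\<bar> * (\<Sum>j\<in>insert a A. \<bar>v$j\<bar>)"
        using z1 \<open>i \<in> A\<close> by force
    qed
    have sumeq: "(\<Sum>i\<in>A. v$i * DF i (z' i)) = (\<Sum>i\<in>A. v$i * DF i (z i))"
      using insert.hyps by (intro sum.cong) (auto simp: z'_def)
    have "y + k *\<^sub>R (\<Sum>i\<in>insert a A. (v$i) *\<^sub>R axis i (1::real)) = y' + (k * v$a) *\<^sub>R axis a (1::real)"
      using insert.hyps by (simp add: y'_def algebra_simps)
    then have "F (y + k *\<^sub>R (\<Sum>i\<in>insert a A. (v$i) *\<^sub>R axis i (1::real))) - F y
        = (F (y' + (k * v$a) *\<^sub>R axis a (1::real)) - F y') + (F y' - F y)" by simp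
    also have "\<dots> = k * (\<Sum>i\<in>insert a A. v$i * DF i (z' i))"
      using th2 z2 insert.hyps sumeq by (simp add: y'_def z'_def algebra_simps)
    finally show "\<exists>z. (\<forall>i\<in>insert a A. norm (z i - y) \<le> \<bar>k\<bar> * (\<Sum>j\<in>insert a A. \<bar>v$j\<bar>))
      \<and> F (y + k *\<^sub>R (\<Sum>i\<in>insert a A. (v$i) *\<^sub>R axis i (1::real))) - F y = k * (\<Sum>i\<in>insert a A. v$i * DF i (z i))"
      using za zA by (intro exI[of _ z']) auto
  qed
qed

lemma line_deriv0:
  fixes F :: "real^'n::finite \<Rightarrow> real"
  assumes d: "\<And>i x. ((\<lambda>h. F (x + h *\<^sub>R axis i 1)) has_real_derivative DF i x) (at 0)"
  assumes cont: "\<And>i. continuous_on UNIV (DF i)"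
  shows "((\<lambda>k. F (x + k *\<^sub>R v)) has_real_derivative (\<Sum>i\<in>UNIV. v$i * DF i x)) (at 0)"
proof -
  have ve: "(\<Sum>i\<in>UNIV. (v$i) *\<^sub>R axis i (1::real)) = v"
    using basis_expansion[of v] by (simp add: scalar_mult_eq_scaleR)
  define B where "B = (\<Sum>j\<in>UNIV. \<bar>v$j\<bar>)"
  have "\<forall>k. \<exists>z. (\<forall>i\<in>UNIV. norm (z i - x) \<le> \<bar>k\<bar> * B)
      \<and> F (x + k *\<^sub>R v) - F x = k * (\<Sum>i\<in>UNIV. v$i * DF i (z i))"
    using telescope[of F DF UNIV v, OF d] ve unfolding B_def by auto
  from choice[OF this] obtain Z where Z: "\<forall>k. (\<forall>i\<in>UNIV. norm (Z k i - x) \<le> \<bar>k\<bar> * B)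
      \<and> F (x + k *\<^sub>R v) - F x = k * (\<Sum>i\<in>UNIV. v$i * DF i (Z k i))" by blast
  then have Z1: "\<And>k i. norm (Z k i - x) \<le> \<bar>k\<bar> * B"
    and Z2: "\<And>k. F (x + k *\<^sub>R v) - F x = k * (\<Sum>i\<in>UNIV. v$i * DF i (Z k i))"
    by auto
  have Zt: "((\<lambda>k. Z k i) \<longlongrightarrow> x) (at 0)" for i
  proof -
    have "((\<lambda>k. Z k i - x) \<longlongrightarrow> 0) (at 0)"
    proof (rule Lim_null_comparison)
      show "\<forall>\<^sub>F k in at 0. norm (Z k i - x) \<le> \<bar>k\<bar> * B" using Z1 by simp
      have "((\<lambda>k::real. \<bar>k\<bar> * B) \<longlongrightarrow> \<bar>0\<bar> * B) (at 0)"
        by (intro tendsto_intros)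
      then show "((\<lambda>k::real. \<bar>k\<bar> * B) \<longlongrightarrow> 0) (at 0)" by simp
    qed
    then show ?thesis by (simp add: LIM_zero_iff)
  qed
  have "((\<lambda>k. \<Sum>i\<in>UNIV. v$i * DF i (Z k i)) \<longlongrightarrow> (\<Sum>i\<in>UNIV. v$i * DF i x)) (at 0)"
  proof (intro tendsto_sum tendsto_mult tendsto_const)
    fix i
    have "isCont (DF i) x" using cont[of i] by (simp add: continuous_on_eq_continuous_at)
    then show "((\<lambda>k. DF i (Z k i)) \<longlongrightarrow> DF i x) (at 0)"
      using isCont_tendsto_compose Zt by blast
  qed
  moreover have "\<forall>\<^sub>F k in at 0. (\<Sum>i\<in>UNIV. v$i * DF i (Z k i)) = (F (x + k *\<^sub>R v) - F (x + 0 *\<^sub>R v)) / (k - 0)"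
    using Z2 by (auto simp: eventually_at_filter)
  ultimately have "((\<lambda>k. (F (x + k *\<^sub>R v) - F (x + 0 *\<^sub>R v)) / (k - 0)) \<longlongrightarrow> (\<Sum>i\<in>UNIV. v$i * DF i x)) (at 0)"
    by (rule Lim_transform_eventually)
  then show ?thesis by (simp only: has_field_derivative_iff)
qed

lemma line_deriv:
  fixes F :: "real^'n::finite \<Rightarrow> real"
  assumes d: "\<And>i x. ((\<lambda>h. F (x + h *\<^sub>R axis i 1)) has_real_derivative DF i x) (at 0)"
  assumes cont: "\<And>i. continuous_on UNIV (DF i)"
  shows "((\<lambda>k. F (x + k *\<^sub>R v)) has_real_derivative (\<Sum>i\<in>UNIV. v$i * DF i (x + h0 *\<^sub>R v))) (at h0)"
proof -
  have "((\<lambda>k. F ((x + h0 *\<^sub>R v) + k *\<^sub>R v)) has_real_derivative (\<Sum>i\<in>UNIV. v$i * DF i (x + h0 *\<^sub>R v))) (at 0)"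
    by (rule line_deriv0[OF d cont])
  moreover have "(\<lambda>k. F ((x + h0 *\<^sub>R v) + k *\<^sub>R v)) = (\<lambda>k. (\<lambda>k. F (x + k *\<^sub>R v)) (k + h0))"
    by (auto simp: algebra_simps scaleR_add_left)
  ultimately show ?thesis using DERIV_shift[where f="\<lambda>k. F (x + k *\<^sub>R v)" and x=0 and z=h0] by simp
qed

lemma max_second:
  fixes W :: "real^'n::finite \<Rightarrow> real"
  assumes dW: "\<And>i x. ((\<lambda>h. W (x + h *\<^sub>R axis i 1)) has_real_derivative DW i x) (at 0)"
    and cW: "\<And>i. continuous_on UNIV (DW i)"
    and dDW: "\<And>i j x. ((\<lambda>h. DW i (x + h *\<^sub>R axis j 1)) has_real_derivative DDW i j x) (at 0)"
    and cDW: "\<And>i j. continuous_on UNIV (DDW i j)"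
    and mx: "\<And>x. W x \<le> W x0"
  shows "DW i x0 = 0" "(\<Sum>i\<in>UNIV. e$i * (\<Sum>j\<in>UNIV. e$j * DDW i j x0)) \<le> 0"
proof -
  have "((\<lambda>h. W (x0 + h *\<^sub>R axis i 1)) has_real_derivative DW i x0) (at 0)" by (rule dW)
  then show "DW i x0 = 0"
    by (rule DERIV_local_max[where d=1]) (auto intro: mx)
next
  define g where "g h = W (x0 + h *\<^sub>R e)" for h
  define g' where "g' h = (\<Sum>i\<in>UNIV. e$i * DW i (x0 + h *\<^sub>R e))" for h
  define g2 where "g2 = (\<Sum>i\<in>UNIV. e$i * (\<Sum>j\<in>UNIV. e$j * DDW i j x0))"
  have dg: "(g has_real_derivative g' h) (at h)" for h
    unfolding g_def g'_def by (rule line_deriv[OF dW cW])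
  have dg'0: "((\<lambda>h. DW i (x0 + h *\<^sub>R e)) has_real_derivative (\<Sum>j\<in>UNIV. e$j * DDW i j x0)) (at 0)" for i
    using line_deriv[of "DW i" "DDW i", OF dDW cDW, of x0 e 0] by simp
  have dg': "(g' has_real_derivative g2) (at 0)"
    unfolding g'_def g2_def by (intro DERIV_sum DERIV_cmult dg'0)
  have g'0: "g' 0 = 0"
    using dg[of 0] by (rule DERIV_local_max[where d=1]) (auto simp: g_def intro: mx)
  show "g2 \<le> 0"
  proof (rule ccontr)
    assume "\<not> g2 \<le> 0"
    then have "0 < g2" by simp
    from DERIV_pos_inc_right[OF dg' this] obtain d where d: "d > 0" "\<And>h. h > 0 \<Longrightarrow> h < d \<Longrightarrow> g' 0 < g' (0 + h)"
      by blast
    have "0 < d/2" using d by simp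
    from MVT2[OF this, of g g'] dg obtain z where z: "0 < z" "z < d/2" "g (d/2) - g 0 = (d/2 - 0) * g' z"
      by blast
    have "g' z > 0" using d(2)[of z] z g'0 by simp
    then have "(d/2 - 0) * g' z > 0" using d by simp
    then have "g (d/2) > g 0" using z(3) by simp
    moreover have "g (d/2) \<le> g 0" by (simp add: g_def mx)
    ultimately show False by simp
  qed
qed




lemma dbl_insert:
  fixes X :: "'a \<Rightarrow> 'a \<Rightarrow> real"
  assumes "a \<notin> A" "finite A"
  shows "(\<Sum>i\<in>insert a A. \<Sum>j\<in>insert a A. X i j) = X a a + (\<Sum>j\<in>A. X a j) + (\<Sum>i\<in>A. X i a) + (\<Sum>i\<in>A. \<Sum>j\<in>A. X i j)"
  using assms by (simp add: sum.distrib)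

lemma form_upd:
  fixes q :: "'a \<Rightarrow> 'a \<Rightarrow> real"
  assumes "a \<notin> A" "finite A" "\<And>i j. q i j = q j i"
  shows "(\<Sum>i\<in>insert a A. \<Sum>j\<in>insert a A. q i j * (\<eta>(a:=t)) i * (\<eta>(a:=t)) j)
       = q a a * t^2 + 2 * t * (\<Sum>j\<in>A. q a j * \<eta> j) + (\<Sum>i\<in>A. \<Sum>j\<in>A. q i j * \<eta> i * \<eta> j)"
proof -
  have e1: "(\<Sum>j\<in>A. q a j * (\<eta>(a:=t)) a * (\<eta>(a:=t)) j) = t * (\<Sum>j\<in>A. q a j * \<eta> j)"
    using assms(1) by (auto simp: sum_distrib_left intro!: sum.cong)
  have e2: "(\<Sum>i\<in>A. q i a * (\<eta>(a:=t)) i * (\<eta>(a:=t)) a) = t * (\<Sum>j\<in>A. q a j * \<eta> j)"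
    using assms(1,3) by (auto simp: sum_distrib_left intro!: sum.cong)
  have e3: "(\<Sum>i\<in>A. \<Sum>j\<in>A. q i j * (\<eta>(a:=t)) i * (\<eta>(a:=t)) j) = (\<Sum>i\<in>A. \<Sum>j\<in>A. q i j * \<eta> i * \<eta> j)"
    using assms(1) by (intro sum.cong) (auto intro!: sum.cong)
  show ?thesis
    unfolding dbl_insert[OF assms(1,2)] e1 e2 e3 by (simp add: power2_eq_square)
qed

lemma psd_trace_aux:
  fixes S :: "'a \<Rightarrow> 'a \<Rightarrow> real"
  assumes "finite A"
  shows "\<forall>q. (\<forall>i j. q i j = q j i) \<longrightarrow> (\<forall>\<xi>. 0 \<le> (\<Sum>i\<in>A. \<Sum>j\<in>A. q i j * \<xi> i * \<xi> j))
     \<longrightarrow> (\<forall>\<xi>. 0 \<le> (\<Sum>i\<in>A. \<Sum>j\<in>A. S i j * \<xi> i * \<xi> j)) \<longrightarrow> 0 \<le> (\<Sum>i\<in>A. \<Sum>j\<in>A. q i j * S i j)"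
  using assms
proof (induction A rule: finite_induct)
  case empty
  then show ?case by simp
next
  case (insert a A)
  show ?case
  proof (intro allI impI)
    fix q :: "'a \<Rightarrow> 'a \<Rightarrow> real"
    assume sym: "\<forall>i j. q i j = q j i"
      and qp: "\<forall>\<xi>. 0 \<le> (\<Sum>i\<in>insert a A. \<Sum>j\<in>insert a A. q i j * \<xi> i * \<xi> j)"
      and Sp: "\<forall>\<xi>. 0 \<le> (\<Sum>i\<in>insert a A. \<Sum>j\<in>insert a A. S i j * \<xi> i * \<xi> j)"
    have SpA: "\<forall>\<xi>. 0 \<le> (\<Sum>i\<in>A. \<Sum>j\<in>A. S i j * \<xi> i * \<xi> j)"
    proof
      fix \<xi> :: "'a \<Rightarrow> real"
      have "0 \<le> (\<Sum>i\<in>insert a A. \<Sum>j\<in>insert a A. S i j * (\<xi>(a:=0)) i * (\<xi>(a:=0)) j)" using Sp by blast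
      also have "\<dots> = (\<Sum>i\<in>A. \<Sum>j\<in>A. S i j * \<xi> i * \<xi> j)"
        unfolding dbl_insert[OF insert.hyps(2,1)] using insert.hyps(2)
        by (auto intro!: sum.cong)
      finally show "0 \<le> (\<Sum>i\<in>A. \<Sum>j\<in>A. S i j * \<xi> i * \<xi> j)" .
    qed
    have F: "0 \<le> q a a * t^2 + 2 * t * (\<Sum>j\<in>A. q a j * \<eta> j) + (\<Sum>i\<in>A. \<Sum>j\<in>A. q i j * \<eta> i * \<eta> j)" for t \<eta>
    proof -
      have "0 \<le> (\<Sum>i\<in>insert a A. \<Sum>j\<in>insert a A. q i j * (\<eta>(a:=t)) i * (\<eta>(a:=t)) j)"
        using qp by blast
      also have "\<dots> = q a a * t^2 + 2 * t * (\<Sum>j\<in>A. q a j * \<eta> j) + (\<Sum>i\<in>A. \<Sum>j\<in>A. q i j * \<eta> i * \<eta> j)"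
        by (rule form_upd[OF insert.hyps(2,1)]) (use sym in auto)
      finally show ?thesis .
    qed
    have qaa: "q a a \<ge> 0"
    proof -
      have "0 \<le> q a a * 1^2 + 2 * 1 * (\<Sum>j\<in>A. q a j * 0) + (\<Sum>i\<in>A. \<Sum>j\<in>A. q i j * 0 * 0)"
        using F[of 1 "\<lambda>_. 0"] by simp
      then show ?thesis by simp
    qed
    have decomp: "(\<Sum>i\<in>insert a A. \<Sum>j\<in>insert a A. q i j * S i j) = q a a * S a a
       + (\<Sum>j\<in>A. q a j * S a j) + (\<Sum>i\<in>A. q i a * S i a) + (\<Sum>i\<in>A. \<Sum>j\<in>A. q i j * S i j)"
      by (rule dbl_insert[OF insert.hyps(2,1)])
    show "0 \<le> (\<Sum>i\<in>insert a A. \<Sum>j\<in>insert a A. q i j * S i j)"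
    proof (cases "q a a = 0")
      case True
      have L0: "(\<Sum>j\<in>A. q a j * \<eta> j) = 0" for \<eta>
      proof (rule ccontr)
        define L where "L = (\<Sum>j\<in>A. q a j * \<eta> j)"
        define R where "R = (\<Sum>i\<in>A. \<Sum>j\<in>A. q i j * \<eta> i * \<eta> j)"
        assume "(\<Sum>j\<in>A. q a j * \<eta> j) \<noteq> 0"
        then have "L \<noteq> 0" by (simp add: L_def)
        have "0 \<le> q a a * (-(R+1)/(2*L))^2 + 2 * (-(R+1)/(2*L)) * L + R"
          using F[of "-(R+1)/(2*L)" \<eta>] by (simp add: L_def R_def)
        also have "\<dots> = -1" using True \<open>L \<noteq> 0\<close> by (simp add: field_simps)
        finally show False by simp
      qed
      have qaj: "q a j = 0" if "j \<in> A" for j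
        using L0[of "\<lambda>k. if k = j then 1 else 0"] that insert.hyps(1)
        by (simp add: if_distrib cong: if_cong)
      have "(\<Sum>j\<in>A. q a j * S a j) = 0" "(\<Sum>i\<in>A. q i a * S i a) = 0"
        using qaj sym by auto
      moreover have "0 \<le> (\<Sum>i\<in>A. \<Sum>j\<in>A. q i j * S i j)"
      proof -
        have "\<forall>\<xi>. 0 \<le> (\<Sum>i\<in>A. \<Sum>j\<in>A. q i j * \<xi> i * \<xi> j)"
        proof
          fix \<xi> show "0 \<le> (\<Sum>i\<in>A. \<Sum>j\<in>A. q i j * \<xi> i * \<xi> j)"
            using F[of 0 \<xi>] by simp
        qed
        then show ?thesis using insert.IH sym SpA by blast
      qed
      ultimately show ?thesis using decomp True by simp
    next
      case False
      then have qpos: "q a a > 0" using qaa by simp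
      define q' where "q' i j = q i j - q a i * q a j / q a a" for i j
      have sym': "\<forall>i j. q' i j = q' j i" using sym by (simp add: q'_def mult.commute)
      have q'a: "q' a j = 0" "q' j a = 0" for j using qpos sym by (simp_all add: q'_def)
      have split: "(\<Sum>i\<in>insert a A. \<Sum>j\<in>insert a A. q i j * S i j) =
          (\<Sum>i\<in>insert a A. \<Sum>j\<in>insert a A. q' i j * S i j)
          + (\<Sum>i\<in>insert a A. \<Sum>j\<in>insert a A. S i j * q a i * q a j) / q a a"
        by (simp add: q'_def sum_divide_distrib sum.distrib[symmetric] algebra_simps diff_divide_distrib)
      have p1: "0 \<le> (\<Sum>i\<in>insert a A. \<Sum>j\<in>insert a A. S i j * q a i * q a j)"
        using Sp by blast
      have p2: "(\<Sum>i\<in>insert a A. \<Sum>j\<in>insert a A. q' i j * S i j) = (\<Sum>i\<in>A. \<Sum>j\<in>A. q' i j * S i j)"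
        unfolding dbl_insert[OF insert.hyps(2,1)] using q'a by simp
      have q'p: "\<forall>\<xi>. 0 \<le> (\<Sum>i\<in>A. \<Sum>j\<in>A. q' i j * \<xi> i * \<xi> j)"
      proof
        fix \<eta> :: "'a \<Rightarrow> real"
        define L where "L = (\<Sum>j\<in>A. q a j * \<eta> j)"
        define R where "R = (\<Sum>i\<in>A. \<Sum>j\<in>A. q i j * \<eta> i * \<eta> j)"
        have "0 \<le> q a a * (-L/q a a)^2 + 2 * (-L/q a a) * L + R"
          using F[of "-L/q a a" \<eta>] by (simp add: L_def R_def)
        also have "\<dots> = R - L^2 / q a a" using qpos by (simp add: field_simps power2_eq_square)
        also have "\<dots> = (\<Sum>i\<in>A. \<Sum>j\<in>A. q' i j * \<eta> i * \<eta> j)"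
        proof -
          have "L^2 = (\<Sum>i\<in>A. \<Sum>j\<in>A. (q a i * \<eta> i) * (q a j * \<eta> j))"
            by (simp add: L_def power2_eq_square sum_product)
          then have "L^2 / q a a = (\<Sum>i\<in>A. \<Sum>j\<in>A. (q a i * q a j / q a a) * \<eta> i * \<eta> j)"
            by (simp add: sum_divide_distrib algebra_simps)
          then show ?thesis
            by (simp add: R_def q'_def algebra_simps sum_subtractf[symmetric])
        qed
        finally show "0 \<le> (\<Sum>i\<in>A. \<Sum>j\<in>A. q' i j * \<eta> i * \<eta> j)" .
      qed
      have "0 \<le> (\<Sum>i\<in>A. \<Sum>j\<in>A. q' i j * S i j)" using insert.IH sym' q'p SpA by blast
      then show ?thesis unfolding split p2 using p1 qpos by simp
    qed
  qed
qed




lemma holder_cont: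
  fixes f :: "real \<Rightarrow> real^'n::finite \<Rightarrow> real"
  assumes h: "holder_loc \<alpha> ({s<..} \<times> UNIV) f" and a: "0 < \<alpha>" and t: "s < t0"
  shows "continuous_on UNIV (f t0)"
proof (rule continuous_at_imp_continuous_on, intro ballI)
  fix x :: "real^'n" assume "x \<in> UNIV"
  have K: "compact ({t0} \<times> cball x 1)" by (intro compact_Times) auto
  have "{t0} \<times> cball x 1 \<subseteq> {s<..} \<times> UNIV" using t by auto
  note hh = h[unfolded holder_loc_def, rule_format, OF conjI[OF K this]]
  then obtain C where C0: "\<forall>t y t' y'. (t, y) \<in> {t0} \<times> cball x 1 \<and> (t', y') \<in> {t0} \<times> cball x 1 \<longrightarrow>
        \<bar>f t y - f t' y'\<bar> \<le> C * (\<bar>t - t'\<bar> powr (\<alpha> / 2) + norm (y - y') powr \<alpha>)"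
    by blast
  note C = C0[rule_format, OF conjI]
  have "((\<lambda>y. f t0 y - f t0 x) \<longlongrightarrow> 0) (at x)"
  proof (rule Lim_null_comparison)
    have "\<forall>\<^sub>F y in at x. y \<in> cball x 1"
      by (rule eventually_at_in_open'[of "ball x 1", THEN eventually_mono]) auto
    then show "\<forall>\<^sub>F y in at x. norm (f t0 y - f t0 x) \<le> C * norm (y - x) powr \<alpha>"
    proof (rule eventually_mono)
      fix y assume "y \<in> cball x 1"
      then show "norm (f t0 y - f t0 x) \<le> C * norm (y - x) powr \<alpha>"
        using C[of t0 y t0 x] by simp
    qed
    have "((\<lambda>y. norm (y - x) powr \<alpha>) \<longlongrightarrow> 0) (at x)"
      by (rule tendsto_zero_powrI) (auto intro!: tendsto_eq_intros a simp: LIM_zero_iff)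
    then have "((\<lambda>y. C * norm (y - x) powr \<alpha>) \<longlongrightarrow> C * 0) (at x)"
      by (intro tendsto_mult tendsto_const)
    then show "((\<lambda>y. C * norm (y - x) powr \<alpha>) \<longlongrightarrow> 0) (at x)" by simp
  qed
  then show "isCont (f t0) x" by (simp add: isCont_def LIM_zero_iff)
qed




lemma comparison:
  fixes q :: "real \<Rightarrow> real^'n::finite \<Rightarrow> 'n \<Rightarrow> 'n \<Rightarrow> real"
    and b :: "real \<Rightarrow> real^'n \<Rightarrow> 'n \<Rightarrow> real"
    and c :: "real \<Rightarrow> real^'n \<Rightarrow> real"
    and u :: "real \<Rightarrow> real^'n \<Rightarrow> real"
  assumes sol: "cauchy_sol \<alpha> q b c s f u"
    and a: "0 < \<alpha>"
    and cnn: "\<And>t x. s < t \<Longrightarrow> t \<le> T \<Longrightarrow> c t x \<ge> 0"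
    and qsym: "\<And>t x i j. s < t \<Longrightarrow> t \<le> T \<Longrightarrow> q t x i j = q t x j i"
    and qpsd: "\<And>t x \<xi>. s < t \<Longrightarrow> t \<le> T \<Longrightarrow> 0 \<le> (\<Sum>i\<in>UNIV. \<Sum>j\<in>UNIV. q t x i j * \<xi>$i * \<xi>$j)"
    and phC2: "C2 \<phi>" and phpos: "\<And>x. \<phi> x > 0"
    and phA: "\<And>t x. s < t \<Longrightarrow> t \<le> T \<Longrightarrow> Aop q b c t \<phi> x \<le> M" and M: "M \<ge> 0"
    and psC2: "C2 \<psi>" and pspos: "\<And>x. \<psi> x > 0" and psinf: "filterlim \<psi> at_top at_infinity"
    and psA: "\<And>t x. s < t \<Longrightarrow> t \<le> T \<Longrightarrow> Aop q b c t \<psi> x \<le> lam * \<psi> x"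
    and fle: "\<And>x. f x \<le> \<phi> x"
    and t1: "s \<le> t1" "t1 \<le> T"
  shows "u t1 x1 \<le> \<phi> x1 + M * (t1 - s)"
proof (rule ccontr)
  assume neg: "\<not> u t1 x1 \<le> \<phi> x1 + M * (t1 - s)"
  define \<delta> where "\<delta> = u t1 x1 - \<phi> x1 - M * (t1 - s)"
  have \<delta>: "\<delta> > 0" using neg by (simp add: \<delta>_def)
  from sol obtain ut ux uxx where
      ucont: "continuous_on ({s..} \<times> UNIV) (\<lambda>(t, x). u t x)"
    and ubdd: "\<And>T. bounded ((\<lambda>(t, x). u t x) ` ({s..T} \<times> UNIV))"
    and uinit: "\<And>x. u s x = f x"
    and dut: "\<And>t x. t > s \<Longrightarrow> ((\<lambda>\<tau>. u \<tau> x) has_real_derivative ut t x) (at t)"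
    and dux: "\<And>t x i. t > s \<Longrightarrow> ((\<lambda>h. u t (x + h *\<^sub>R axis i 1)) has_real_derivative ux t x i) (at 0)"
    and duxx: "\<And>t x i j. t > s \<Longrightarrow> ((\<lambda>h. ux t (x + h *\<^sub>R axis j 1) i) has_real_derivative uxx t x i j) (at 0)"
    and cux: "\<And>i. continuous_on ({s<..} \<times> UNIV) (\<lambda>(t, x). ux t x i)"
    and huxx: "\<And>i j. holder_loc \<alpha> ({s<..} \<times> UNIV) (\<lambda>t x. uxx t x i j)"
    and eq: "\<And>t x. t > s \<Longrightarrow> ut t x = (\<Sum>i\<in>UNIV. \<Sum>j\<in>UNIV. q t x i j * uxx t x i j)
                                 + (\<Sum>i\<in>UNIV. b t x i * ux t x i) - c t x * u t x"
    unfolding cauchy_sol_def by blast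
  from phC2 have phc: "continuous_on UNIV \<phi>"
    and ph1: "\<And>i x. ((\<lambda>h. \<phi> (x + h *\<^sub>R axis i 1)) has_real_derivative pd i \<phi> x) (at 0)"
    and ph1c: "\<And>i. continuous_on UNIV (pd i \<phi>)"
    and ph2: "\<And>i j x. ((\<lambda>h. pd i \<phi> (x + h *\<^sub>R axis j 1)) has_real_derivative pd j (pd i \<phi>) x) (at 0)"
    and ph2c: "\<And>i j. continuous_on UNIV (pd j (pd i \<phi>))"
    unfolding C2_def by blast+
  from psC2 have psc: "continuous_on UNIV \<psi>"
    and ps1: "\<And>i x. ((\<lambda>h. \<psi> (x + h *\<^sub>R axis i 1)) has_real_derivative pd i \<psi> x) (at 0)"
    and ps1c: "\<And>i. continuous_on UNIV (pd i \<psi>)"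
    and ps2: "\<And>i j x. ((\<lambda>h. pd i \<psi> (x + h *\<^sub>R axis j 1)) has_real_derivative pd j (pd i \<psi>) x) (at 0)"
    and ps2c: "\<And>i j. continuous_on UNIV (pd j (pd i \<psi>))"
    unfolding C2_def by blast+
  from ubdd[of T] obtain B where B: "\<And>t x. s \<le> t \<Longrightarrow> t \<le> T \<Longrightarrow> \<bar>u t x\<bar> \<le> B"
    unfolding bounded_iff by fastforce
  define k where "k = \<bar>lam\<bar> + 1"
  have k: "k > 0" "k > lam" by (auto simp: k_def)
  define \<epsilon> where "\<epsilon> = \<delta> / (2 * exp (k * (t1 - s)) * \<psi> x1)"
  have \<epsilon>: "\<epsilon> > 0" using \<delta> pspos[of x1] by (simp add: \<epsilon>_def)
  define w where "w p = u (fst p) (snd p) - \<phi> (snd p) - M * (fst p - s) - \<epsilon> * exp (k * (fst p - s)) * \<psi> (snd p)" for p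
  have w1: "w (t1, x1) = \<delta> / 2"
    using pspos[of x1] by (simp add: w_def \<epsilon>_def \<delta>_def field_simps)
  obtain R where R: "\<And>x. R \<le> norm x \<Longrightarrow> (B + 1) / \<epsilon> \<le> \<psi> x"
    using psinf unfolding filterlim_at_top eventually_at_infinity by blast
  have wneg: "w (t, x) \<le> -1" if "s \<le> t" "t \<le> T" "R \<le> norm x" for t x
  proof -
    have "B + 1 \<le> \<epsilon> * \<psi> x" using R[OF that(3)] \<epsilon> by (simp add: field_simps)
    also have "\<dots> \<le> \<epsilon> * exp (k * (t - s)) * \<psi> x"
      using \<epsilon> pspos[of x] k that by (simp add: mult_le_cancel_right1 mult.assoc)
    finally have "B + 1 \<le> \<epsilon> * exp (k * (t - s)) * \<psi> x" .
    moreover have "u t x \<le> B" using B[OF that(1,2), of x] by linarith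
    moreover have "0 \<le> M * (t - s)" using M that by simp
    moreover have "\<phi> x > 0" by (rule phpos)
    ultimately show ?thesis by (simp add: w_def)
  qed
  define K where "K = {s..T} \<times> cball (0::real^'n) R"
  have x1R: "norm x1 < R"
  proof (rule ccontr)
    assume "\<not> norm x1 < R"
    then have "w (t1, x1) \<le> -1" using wneg t1 by simp
    then show False using w1 \<delta> by simp
  qed
  have t1K: "(t1, x1) \<in> K" using x1R t1 by (simp add: K_def)
  have wcont: "continuous_on K w"
  proof -
    have sub: "K \<subseteq> {s..} \<times> UNIV" by (auto simp: K_def)
    have c1: "continuous_on K (\<lambda>p. u (fst p) (snd p))"
      using continuous_on_subset[OF ucont sub] by (simp add: case_prod_beta)
    have c2: "continuous_on K (\<lambda>p. \<phi> (snd p))"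
      by (rule continuous_on_compose2[OF phc]) (auto intro: continuous_intros)
    have c3: "continuous_on K (\<lambda>p. \<psi> (snd p))"
      by (rule continuous_on_compose2[OF psc]) (auto intro: continuous_intros)
    show ?thesis unfolding w_def
      by (intro continuous_intros c1 c2 c3)
  qed
  have "K \<noteq> {}" using t1K by auto
  moreover have "compact K" unfolding K_def by (intro compact_Times) auto
  ultimately obtain p0 where p0: "p0 \<in> K" "\<And>p. p \<in> K \<Longrightarrow> w p \<le> w p0"
    using continuous_attains_sup[OF _ _ wcont] by blast
  obtain t0 x0 where p0eq: "p0 = (t0, x0)" by fastforce
  have w0pos: "w (t0, x0) > 0" using p0(2)[OF t1K] w1 \<delta> p0eq by simp
  have wmax: "w (t, x) \<le> w (t0, x0)" if "s \<le> t" "t \<le> T" for t x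
  proof (cases "R \<le> norm x")
    case True then show ?thesis using wneg[OF that True] w0pos by simp
  next
    case False then show ?thesis using p0(2)[of "(t, x)"] that p0eq by (simp add: K_def)
  qed
  have t0: "s \<le> t0" "t0 \<le> T" using p0 p0eq by (auto simp: K_def)
  have "t0 \<noteq> s"
  proof
    assume "t0 = s"
    then have "w (t0, x0) = f x0 - \<phi> x0 - \<epsilon> * \<psi> x0" by (simp add: w_def uinit)
    also have "\<dots> < 0" using fle[of x0] mult_pos_pos[OF \<epsilon> pspos[of x0]] by linarith
    finally show False using w0pos by simp
  qed
  with t0 have st0: "s < t0" by simp
  define e where "e = exp (k * (t0 - s))"
  have e: "e > 0" by (simp add: e_def)
  define Dt where "Dt = ut t0 x0 - M - \<epsilon> * (e * k) * \<psi> x0"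
  have dw: "((\<lambda>\<tau>. w (\<tau>, x0)) has_real_derivative Dt) (at t0)"
    unfolding w_def Dt_def e_def fst_conv snd_conv
    by (rule derivative_eq_intros dut[OF st0] | simp)+
  have Dt: "Dt \<ge> 0"
  proof (rule ccontr)
    assume "\<not> Dt \<ge> 0"
    then have "Dt < 0" by simp
    from DERIV_neg_dec_left[OF dw this] obtain d where d: "d > 0"
      "\<And>h. h > 0 \<Longrightarrow> h < d \<Longrightarrow> w (t0, x0) < w (t0 - h, x0)" by blast
    define h where "h = min (d/2) (t0 - s)"
    have h: "h > 0" "h < d" "h \<le> t0 - s" using d st0 by (auto simp: h_def)
    have "w (t0 - h, x0) \<le> w (t0, x0)" using h t0 by (intro wmax) auto
    with d(2)[OF h(1,2)] show False by simp
  qed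
  define W where "W x = w (t0, x)" for x
  define DW where "DW i x = ux t0 x i - pd i \<phi> x - \<epsilon> * e * pd i \<psi> x" for i x
  define DDW where "DDW i j x = uxx t0 x i j - pd j (pd i \<phi>) x - \<epsilon> * e * pd j (pd i \<psi>) x" for i j x
  have Wx: "W x = u t0 x - \<phi> x - M * (t0 - s) - \<epsilon> * e * \<psi> x" for x
    by (simp add: W_def w_def e_def)
  have dW: "((\<lambda>h. W (x + h *\<^sub>R axis i 1)) has_real_derivative DW i x) (at 0)" for i x
    unfolding Wx DW_def
    by (rule derivative_eq_intros dux[OF st0] ph1 ps1 | simp)+
  have cW: "continuous_on UNIV (DW i)" for i
  proof -
    have "continuous_on UNIV (\<lambda>x. (\<lambda>(t, x). ux t x i) (t0, x))"
      by (rule continuous_on_compose2[OF cux[of i]]) (auto intro: continuous_intros simp: st0)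
    then show ?thesis unfolding DW_def
      by (intro continuous_intros ph1c ps1c) simp
  qed
  have dDW: "((\<lambda>h. DW i (x + h *\<^sub>R axis j 1)) has_real_derivative DDW i j x) (at 0)" for i j x
    unfolding DW_def DDW_def
    by (rule derivative_eq_intros duxx[OF st0] ph2 ps2 | simp)+
  have cDW: "continuous_on UNIV (DDW i j)" for i j
  proof -
    have "continuous_on UNIV ((\<lambda>t x. uxx t x i j) t0)"
      by (rule holder_cont[OF huxx a st0])
    then show ?thesis unfolding DDW_def
      by (intro continuous_intros ph2c ps2c) simp
  qed
  have Wmx: "W x \<le> W x0" for x unfolding W_def using wmax t0 by simp
  have DW0: "DW i x0 = 0" for i by (rule max_second(1)[OF dW cW dDW cDW Wmx])
  have H: "(\<Sum>i\<in>UNIV. \<xi>$i * (\<Sum>j\<in>UNIV. \<xi>$j * DDW i j x0)) \<le> 0" for \<xi> :: "real^'n"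
    by (rule max_second(2)[OF dW cW dDW cDW Wmx])
  have Q: "(\<Sum>i\<in>UNIV. \<Sum>j\<in>UNIV. q t0 x0 i j * DDW i j x0) \<le> 0"
  proof -
    have "\<forall>\<xi>. 0 \<le> (\<Sum>i\<in>UNIV. \<Sum>j\<in>UNIV. q t0 x0 i j * \<xi> i * \<xi> j)"
    proof
      fix \<xi> :: "'n \<Rightarrow> real"
      show "0 \<le> (\<Sum>i\<in>UNIV. \<Sum>j\<in>UNIV. q t0 x0 i j * \<xi> i * \<xi> j)"
        using qpsd[OF st0 t0(2), of x0 "\<chi> i. \<xi> i"] by simp
    qed
    moreover have "\<forall>\<xi>. 0 \<le> (\<Sum>i\<in>UNIV. \<Sum>j\<in>UNIV. (- DDW i j x0) * \<xi> i * \<xi> j)"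
    proof
      fix \<xi> :: "'n \<Rightarrow> real"
      have "(\<Sum>i\<in>UNIV. \<Sum>j\<in>UNIV. (- DDW i j x0) * \<xi> i * \<xi> j)
          = - (\<Sum>i\<in>UNIV. (\<chi> i. \<xi> i)$i * (\<Sum>j\<in>UNIV. (\<chi> i. \<xi> i)$j * DDW i j x0))"
        by (simp add: sum_distrib_left sum_negf[symmetric] mult_ac)
      then show "0 \<le> (\<Sum>i\<in>UNIV. \<Sum>j\<in>UNIV. (- DDW i j x0) * \<xi> i * \<xi> j)"
        using H[of "\<chi> i. \<xi> i"] by linarith
    qed
    moreover have "\<forall>i j. q t0 x0 i j = q t0 x0 j i" using qsym[OF st0 t0(2)] by blast
    ultimately have "0 \<le> (\<Sum>i\<in>UNIV. \<Sum>j\<in>UNIV. q t0 x0 i j * (- DDW i j x0))"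
      using psd_trace_aux[of UNIV "\<lambda>i j. - DDW i j x0"] by auto
    then show ?thesis by (simp add: sum_negf)
  qed
  define Qs where "Qs = (\<Sum>i\<in>UNIV. \<Sum>j\<in>UNIV. q t0 x0 i j * DDW i j x0)"
  define Qu where "Qu = (\<Sum>i\<in>UNIV. \<Sum>j\<in>UNIV. q t0 x0 i j * uxx t0 x0 i j)"
  define Qp where "Qp = (\<Sum>i\<in>UNIV. \<Sum>j\<in>UNIV. q t0 x0 i j * pd j (pd i \<phi>) x0)"
  define Qps where "Qps = (\<Sum>i\<in>UNIV. \<Sum>j\<in>UNIV. q t0 x0 i j * pd j (pd i \<psi>) x0)"
  define Bu where "Bu = (\<Sum>i\<in>UNIV. b t0 x0 i * ux t0 x0 i)"
  define Bp where "Bp = (\<Sum>i\<in>UNIV. b t0 x0 i * pd i \<phi> x0)"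
  define Bps where "Bps = (\<Sum>i\<in>UNIV. b t0 x0 i * pd i \<psi> x0)"
  have Qseq: "Qs = Qu - Qp - \<epsilon> * e * Qps"
    unfolding Qs_def Qu_def Qp_def Qps_def DDW_def
    by (simp add: right_diff_distrib sum_subtractf sum_distrib_left mult.left_commute)
  have uxeq: "ux t0 x0 i = pd i \<phi> x0 + \<epsilon> * e * pd i \<psi> x0" for i
    using DW0[of i] by (simp add: DW_def)
  have Bueq: "Bu = Bp + \<epsilon> * e * Bps"
    unfolding Bu_def Bp_def Bps_def uxeq
    by (simp add: distrib_left sum.distrib sum_distrib_left mult.left_commute)
  have ut: "ut t0 x0 = Qu + Bu - c t0 x0 * u t0 x0"
    using eq[OF st0, of x0] by (simp add: Qu_def Bu_def)
  have Ap: "Qp + Bp - c t0 x0 * \<phi> x0 \<le> M"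
    using phA[OF st0 t0(2), of x0] by (simp add: Aop_def Qp_def Bp_def)
  have Aps: "Qps + Bps - c t0 x0 * \<psi> x0 \<le> lam * \<psi> x0"
    using psA[OF st0 t0(2), of x0] by (simp add: Aop_def Qps_def Bps_def)
  have u0: "u t0 x0 = W x0 + \<phi> x0 + M * (t0 - s) + \<epsilon> * e * \<psi> x0" by (simp add: Wx)
  have W0: "W x0 > 0" using w0pos by (simp add: W_def)
  have cpos: "c t0 x0 * (W x0 + M * (t0 - s)) \<ge> 0"
    using cnn[OF st0 t0(2), of x0] W0 M st0 by simp
  have ee: "\<epsilon> * e > 0" using \<epsilon> e by simp
  have Aps': "\<epsilon> * e * (Qps + Bps - c t0 x0 * \<psi> x0) \<le> \<epsilon> * e * (lam * \<psi> x0)"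
    using Aps ee by (simp add: mult_left_mono)
  have kk: "\<epsilon> * e * (lam * \<psi> x0) < \<epsilon> * e * (k * \<psi> x0)"
    using ee k pspos[of x0] by (intro mult_strict_left_mono mult_strict_right_mono) auto
  have "Dt = Qs + (Qp + Bp - c t0 x0 * \<phi> x0) + \<epsilon> * e * (Qps + Bps - c t0 x0 * \<psi> x0)
      - c t0 x0 * (W x0 + M * (t0 - s)) - M - \<epsilon> * e * (k * \<psi> x0)"
    unfolding Dt_def ut u0 Qseq Bueq by (simp add: algebra_simps)
  then have "Dt < 0" using Q Ap Aps' kk cpos unfolding Qs_def[symmetric] by linarith
  then show False using Dt by simp
qed




theorem proposition4p7:
  fixes \<alpha> :: real and I :: "real set"
    and q :: "real \<Rightarrow> real^'n::finite \<Rightarrow> 'n \<Rightarrow> 'n \<Rightarrow> real"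
    and b :: "real \<Rightarrow> real^'n \<Rightarrow> 'n \<Rightarrow> real"
    and c :: "real \<Rightarrow> real^'n \<Rightarrow> real"
    and g :: "real \<Rightarrow> real \<Rightarrow> real^'n \<Rightarrow> real^'n \<Rightarrow> real"
    and \<phi> :: "real set \<Rightarrow> real^'n \<Rightarrow> real"
    and M :: "real set \<Rightarrow> real"
  assumes alpha: "0 < \<alpha>" "\<alpha> < 1"
    and I: "I = UNIV \<or> (\<exists>a. I = {a..} \<or> I = {a<..})"
    and q_reg: "\<And>i j. holder_loc \<alpha> (I \<times> UNIV) (\<lambda>t x. q t x i j)"
    and b_reg: "\<And>i. holder_loc \<alpha> (I \<times> UNIV) (\<lambda>t x. b t x i)"
    and c_reg: "holder_loc \<alpha> (I \<times> UNIV) c"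
    and c_inf: "\<exists>c0. \<forall>t\<in>I. \<forall>x. c t x \<ge> c0"
    and q_sym: "\<And>t x i j. t \<in> I \<Longrightarrow> q t x i j = q t x j i"
    and elliptic: "\<exists>\<eta>. (\<forall>t\<in>I. \<forall>x \<xi>. (\<Sum>i\<in>UNIV. \<Sum>j\<in>UNIV. q t x i j * \<xi>$i * \<xi>$j) \<ge> \<eta> t x * (norm \<xi>)\<^sup>2)
                       \<and> (\<exists>\<eta>0>0. \<forall>t\<in>I. \<forall>x. \<eta> t x \<ge> \<eta>0)"
    and lyap: "\<And>J. bdd_interval J \<Longrightarrow> J \<subseteq> I \<Longrightarrow>
                 \<exists>\<psi> lam. (\<forall>x. \<psi> x > 0) \<and> C2 \<psi> \<and> filterlim \<psi> at_top at_infinity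
                       \<and> (\<forall>t\<in>J. \<forall>x. Aop q b c t \<psi> x \<le> lam * \<psi> x)"
    and green_pos: "\<And>t s x y. s \<in> I \<Longrightarrow> s < t \<Longrightarrow> g t s x y > 0"
    and green: "\<And>s f. s \<in> I \<Longrightarrow> continuous_on UNIV f \<Longrightarrow> bounded (range f) \<Longrightarrow>
                 (\<forall>t x. s < t \<longrightarrow> integrable lborel (\<lambda>y. g t s x y * f y))
               \<and> cauchy_sol \<alpha> q b c s f
                   (\<lambda>t x. if t = s then f x else \<integral>y. g t s x y * f y \<partial>lborel)"
    and c_nonneg: "\<And>t x. t \<in> I \<Longrightarrow> c t x \<ge> 0"
    and phi: "\<And>J. bdd_interval J \<Longrightarrow> J \<subseteq> I \<Longrightarrow>
                 (\<forall>x. \<phi> J x > 0) \<and> C2 (\<phi> J) \<and> filterlim (\<phi> J) at_top at_infinity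
               \<and> M J > 0 \<and> (\<forall>t\<in>J. \<forall>x. Aop q b c t (\<phi> J) x \<le> M J)"
  shows "\<forall>J \<rho>. bdd_interval J \<and> J \<subseteq> I \<and> \<rho> > 0 \<longrightarrow>
           (\<exists>K::real. \<forall>t\<in>J. \<forall>s\<in>J. \<forall>x\<in>ball 0 \<rho>. s \<le> t \<longrightarrow> Gnn g t s (\<phi> J) x \<le> ennreal K)"
proof (intro allI impI)
  fix J :: "real set" and \<rho> :: real
  assume H: "bdd_interval J \<and> J \<subseteq> I \<and> \<rho> > 0"
  then have bJ: "bdd_interval J" and JI: "J \<subseteq> I" and rho: "\<rho> > 0" by auto
  have ivJ: "is_interval J" and bdJ: "bounded J" using bJ by (auto simp: bdd_interval_def)
  have inJ: "\<tau> \<in> J" if "s \<in> J" "t \<in> J" "s \<le> \<tau>" "\<tau> \<le> t" for s t \<tau>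
    using ivJ that unfolding is_interval_1 by blast
  define ph where "ph = \<phi> J"
  define MJ where "MJ = M J"
  from phi[OF bJ JI] have phpos: "\<And>x. ph x > 0" and phC2: "C2 ph" and MJ: "MJ > 0"
    and phA: "\<And>t x. t \<in> J \<Longrightarrow> Aop q b c t ph x \<le> MJ"
    unfolding ph_def MJ_def by auto
  from lyap[OF bJ JI] obtain \<psi> lam where psi: "\<And>x. \<psi> x > 0" "C2 \<psi>" "filterlim \<psi> at_top at_infinity"
    "\<And>t x. t \<in> J \<Longrightarrow> Aop q b c t \<psi> x \<le> lam * \<psi> x" by blast
  from elliptic obtain \<eta> \<eta>0 where el: "\<And>t x \<xi>. t \<in> I \<Longrightarrow> (\<Sum>i\<in>UNIV. \<Sum>j\<in>UNIV. q t x i j * \<xi>$i * \<xi>$j) \<ge> \<eta> t x * (norm \<xi>)\<^sup>2"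
    and el0: "\<eta>0 > 0" "\<And>t x. t \<in> I \<Longrightarrow> \<eta> t x \<ge> \<eta>0" by blast
  have qpsd: "0 \<le> (\<Sum>i\<in>UNIV. \<Sum>j\<in>UNIV. q t x i j * \<xi>$i * \<xi>$j)" if "t \<in> I" for t x \<xi>
  proof -
    have "\<eta> t x \<ge> 0" using el0(1) el0(2)[OF that, of x] by linarith
    then have "0 \<le> \<eta> t x * (norm \<xi>)\<^sup>2" by simp
    then show ?thesis using el[OF that, of x \<xi>] by linarith
  qed
  have phc: "continuous_on UNIV ph" using phC2 by (simp add: C2_def)
  obtain r where r: "\<And>t. t \<in> J \<Longrightarrow> \<bar>t\<bar> \<le> r" using bdJ unfolding bounded_iff by auto
  have "bounded (ph ` cball 0 \<rho>)"
    by (intro compact_imp_bounded compact_continuous_image continuous_on_subset[OF phc]) auto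
  then obtain P where P0: "\<forall>x\<in>cball 0 \<rho>. \<bar>ph x\<bar> \<le> P" unfolding bounded_iff by auto
  note P = P0[rule_format]
  have main: "Gnn g t s ph x \<le> ennreal (ph x + MJ * (t - s))"
    if st: "s \<in> J" "t \<in> J" "s < t" for s t x
  proof -
    have sI: "s \<in> I" using st JI by auto
    define fn where "fn n y = min (ph y) (real n)" for n :: nat and y
    have fn_nn: "0 \<le> fn n y" for n y using phpos[of y] by (simp add: fn_def)
    have fn_le: "fn n y \<le> ph y" for n y by (simp add: fn_def)
    have gpos: "g t s x y > 0" for y using green_pos[OF sI st(3)] .
    have bound: "ennreal (\<integral>y. g t s x y * fn n y \<partial>lborel) \<le> ennreal (ph x + MJ * (t - s))"
      and integ: "integrable lborel (\<lambda>y. g t s x y * fn n y)" for n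
    proof -
      have fc: "continuous_on UNIV (fn n)" unfolding fn_def by (intro continuous_intros phc)
      have fb: "bounded (range (fn n))"
        unfolding bounded_iff using fn_nn by (auto simp: fn_def intro!: exI[of _ "real n"])
      from green[OF sI fc fb] have I1: "\<forall>t x. s < t \<longrightarrow> integrable lborel (\<lambda>y. g t s x y * fn n y)"
        and sol: "cauchy_sol \<alpha> q b c s (fn n) (\<lambda>t x. if t = s then fn n x else \<integral>y. g t s x y * fn n y \<partial>lborel)"
        by auto
      show "integrable lborel (\<lambda>y. g t s x y * fn n y)" using I1 st by auto
      have "(\<lambda>t x. if t = s then fn n x else \<integral>y. g t s x y * fn n y \<partial>lborel) t x \<le> ph x + MJ * (t - s)"
      proof (rule comparison[OF sol alpha(1), where T=t])
        show "\<And>\<tau> x. s < \<tau> \<Longrightarrow> \<tau> \<le> t \<Longrightarrow> c \<tau> x \<ge> 0"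
          using inJ[OF st(1,2)] JI c_nonneg by (meson less_imp_le subsetD)
        show "\<And>\<tau> x i j. s < \<tau> \<Longrightarrow> \<tau> \<le> t \<Longrightarrow> q \<tau> x i j = q \<tau> x j i"
          using inJ[OF st(1,2)] JI q_sym by (meson less_imp_le subsetD)
        show "\<And>\<tau> x \<xi>. s < \<tau> \<Longrightarrow> \<tau> \<le> t \<Longrightarrow> 0 \<le> (\<Sum>i\<in>UNIV. \<Sum>j\<in>UNIV. q \<tau> x i j * \<xi>$i * \<xi>$j)"
          using inJ[OF st(1,2)] JI qpsd by (meson less_imp_le subsetD)
        show "\<And>\<tau> x. s < \<tau> \<Longrightarrow> \<tau> \<le> t \<Longrightarrow> Aop q b c \<tau> ph x \<le> MJ"
          using inJ[OF st(1,2)] phA by (meson less_imp_le)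
        show "\<And>\<tau> x. s < \<tau> \<Longrightarrow> \<tau> \<le> t \<Longrightarrow> Aop q b c \<tau> \<psi> x \<le> lam * \<psi> x"
          using inJ[OF st(1,2)] psi(4) by (meson less_imp_le)
      qed (use phC2 phpos MJ psi st fn_le in auto)
      then have "(\<integral>y. g t s x y * fn n y \<partial>lborel) \<le> ph x + MJ * (t - s)" using st by simp
      then show "ennreal (\<integral>y. g t s x y * fn n y \<partial>lborel) \<le> ennreal (ph x + MJ * (t - s))"
        by (rule ennreal_leI)
    qed
    have meas: "(\<lambda>y. ennreal (g t s x y * fn n y)) \<in> borel_measurable lborel" for n
      using borel_measurable_integrable[OF integ[of n]] by measurable
    have inc: "incseq (\<lambda>n y. ennreal (g t s x y * fn n y))"
    proof (rule incseq_SucI, rule le_funI)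
      fix n y
      have "fn n y \<le> fn (Suc n) y" unfolding fn_def by (rule min.mono) auto
      then show "ennreal (g t s x y * fn n y) \<le> ennreal (g t s x y * fn (Suc n) y)"
        using gpos[of y] by (intro ennreal_leI mult_left_mono) auto
    qed
    have sup: "(SUP n. ennreal (g t s x y * fn n y)) = ennreal (g t s x y * ph y)" for y
    proof (rule antisym)
      show "(SUP n. ennreal (g t s x y * fn n y)) \<le> ennreal (g t s x y * ph y)"
        using gpos[of y] fn_le by (intro SUP_least ennreal_leI mult_left_mono) auto
      obtain n :: nat where "ph y \<le> real n" using real_arch_simple by blast
      then have "fn n y = ph y" by (simp add: fn_def)
      then show "ennreal (g t s x y * ph y) \<le> (SUP n. ennreal (g t s x y * fn n y))"
        by (metis (no_types, lifting) SUP_upper UNIV_I)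
    qed
    have "Gnn g t s ph x = (\<integral>\<^sup>+ y. ennreal (g t s x y * ph y) \<partial>lborel)"
      using st by (simp add: Gnn_def)
    also have "\<dots> = (\<integral>\<^sup>+ y. (SUP n. ennreal (g t s x y * fn n y)) \<partial>lborel)" by (simp add: sup)
    also have "\<dots> = (SUP n. \<integral>\<^sup>+ y. ennreal (g t s x y * fn n y) \<partial>lborel)"
      by (rule nn_integral_monotone_convergence_SUP[OF inc meas])
    also have "\<dots> = (SUP n. ennreal (\<integral>y. g t s x y * fn n y \<partial>lborel))"
      using integ gpos fn_nn
      by (intro SUP_cong refl nn_integral_eq_integral AE_I2) (auto intro!: mult_nonneg_nonneg simp: less_imp_le[OF gpos] fn_nn)
    also have "\<dots> \<le> ennreal (ph x + MJ * (t - s))"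
      by (intro SUP_least bound)
    finally show ?thesis .
  qed
  show "\<exists>K::real. \<forall>t\<in>J. \<forall>s\<in>J. \<forall>x\<in>ball 0 \<rho>. s \<le> t \<longrightarrow> Gnn g t s (\<phi> J) x \<le> ennreal K"
  proof (intro exI[of _ "P + MJ * (2 * r)"] ballI impI)
    fix t s x assume tJ: "t \<in> J" and sJ: "s \<in> J" and x: "x \<in> ball (0::real^'n) \<rho>" and le: "s \<le> t"
    have Px: "ph x \<le> P" using P[of x] x by auto
    have ts: "t - s \<le> 2 * r" using r[OF tJ] r[OF sJ] by linarith
    have r0: "0 \<le> r" using r[OF tJ] by linarith
    have "ph x + MJ * (t - s) \<le> P + MJ * (2 * r)"
      using Px ts MJ by (simp add: add_mono mult_left_mono)
    moreover have "ph x \<le> P + MJ * (2 * r)"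
    proof -
      have "0 \<le> MJ * (2 * r)" using MJ r0 by simp
      then show ?thesis using Px by linarith
    qed
    ultimately show "Gnn g t s (\<phi> J) x \<le> ennreal (P + MJ * (2 * r))"
    proof (cases "s = t")
      case True
      then show ?thesis using \<open>ph x \<le> P + MJ * (2 * r)\<close>
        by (simp add: Gnn_def ph_def[symmetric] ennreal_leI)
    next
      case False
      then have "s < t" using le by simp
      from main[OF sJ tJ this, of x] show ?thesis unfolding ph_def
        using \<open>ph x + MJ * (t - s) \<le> P + MJ * (2 * r)\<close>
        by (metis ennreal_leI order_trans ph_def)
    qed
  qed
qed


end
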